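(* Let $f$ be a real-valued symmetric ternary tensor in $(\mathbb{C}^3)^{\otimes 3}$, and suppose there exist $\beta,\gamma\in\mathbb{C}^3$ with $\beta\neq 0$, $\langle\beta,\beta\rangle=0$, and a complex symmetric ternary tensor $f_\beta$ with $\langle f_\beta,\beta\rangle=0$, such that $$f=f_\beta+\beta^{\otimes 2}\otimes\gamma+\beta\otimes\gamma\otimes\beta+\gamma\otimes\beta^{\otimes 2}.$$ Then there exist a $3\times 3$ real orthogonal matrix $T$ and $\lambda\in\mathbb{R}$ such that $T^{\otimes 3}f=\lambda\, e_3^{\otimes 3}$. In particular, $f=\alpha^{\otimes 3}$ for some $\alpha\in\mathbb{R}^3$.
   Context: Ternary signatures on a 3-element domain are identified with tensors in $(\mathbb{C}^3)^{\otimes 3}$; symmetric means invariant under permutation of the arguments. For $u,v\in\mathbb{C}^n$, $\langle u,v\rangle=\sum_j u_jv_j$ (bilinear, no conjugation). For a symmetric tensor $g$ of arity $r\ge1$ and a vector $u$, $\langle g,u\rangle$ is the arity-$(r-1)$ tensor obtained by contracting one (any) index of $g$ with $u$, i.e. $\langle g,u\rangle_{j_2\dots j_r}=\sum_{j} g_{j j_2\dots j_r}u_j$. $e_3=(0,0,1)^T$. *)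

theory Defs
  imports "HOL-Analysis.Analysis"
begin

text \<open>Index set of the 3-element domain: the numeral type 3 (elements 0,1,2, in this order).
  Vectors in C^3 are functions 3 => complex, ternary tensors are functions 3 => 3 => 3 => complex.\<close>

type_synonym cvec3 = "3 \<Rightarrow> complex"
type_synonym ctensor3 = "3 \<Rightarrow> 3 \<Rightarrow> 3 \<Rightarrow> complex"

definition sym_tensor3 :: "ctensor3 \<Rightarrow> bool" where
  "sym_tensor3 f \<longleftrightarrow> (\<forall>i j k. f i j k = f j i k \<and> f i j k = f i k j \<and> f i j k = f k j i
      \<and> f i j k = f j k i \<and> f i j k = f k i j)"

definition real_tensor3 :: "ctensor3 \<Rightarrow> bool" where
  "real_tensor3 f \<longleftrightarrow> (\<forall>i j k. f i j k \<in> \<real>)"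

text \<open>Bilinear form (no conjugation).\<close>
definition bil :: "cvec3 \<Rightarrow> cvec3 \<Rightarrow> complex" where
  "bil u v = (\<Sum>j\<in>UNIV. u j * v j)"

definition contract3 :: "ctensor3 \<Rightarrow> cvec3 \<Rightarrow> (3 \<Rightarrow> 3 \<Rightarrow> complex)" where
  "contract3 g u = (\<lambda>j2 j3. \<Sum>j\<in>UNIV. g j j2 j3 * u j)"

definition tprod3 :: "cvec3 \<Rightarrow> cvec3 \<Rightarrow> cvec3 \<Rightarrow> ctensor3" where
  "tprod3 a b c = (\<lambda>i j k. a i * b j * c k)"

definition mat_act3 :: "real^3^3 \<Rightarrow> ctensor3 \<Rightarrow> ctensor3" where
  "mat_act3 T f = (\<lambda>a b c. \<Sum>i\<in>UNIV. \<Sum>j\<in>UNIV. \<Sum>k\<in>UNIV.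
      of_real (T$a$i) * of_real (T$b$j) * of_real (T$c$k) * f i j k)"

text \<open>e_3, the third standard basis vector (index 2 of the type 3 = {0,1,2}).\<close>
definition e3 :: cvec3 where
  "e3 = (\<lambda>i. if i = 2 then 1 else 0)"

end

theory Submission imports Defs begin

lemma delta3:
  fixes T :: "real^3^3"
  assumes orth: "transpose T ** T = mat 1"
  shows "(\<Sum>p\<in>UNIV. complex_of_real (T$p$x) * of_real (T$p$y)) = (if x = y then 1 else 0)"
proof -
  have "(\<Sum>p\<in>UNIV. T$p$x * T$p$y) = (if x=y then 1 else 0)"
    using arg_cong[OF orth, of "\<lambda>M. M$x$y"] by (simp add: matrix_matrix_mult_def transpose_def mat_def)
  moreover have "(\<Sum>p\<in>UNIV. complex_of_real (T$p$x) * of_real (T$p$y)) = of_real (\<Sum>p\<in>UNIV. T$p$x*T$p$y)" by simp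
  ultimately show ?thesis by simp
qed

lemma slot1:
  fixes T :: "real^3^3" and v :: "3 \<Rightarrow> complex"
  assumes orth: "transpose T ** T = mat 1"
  and z1: "(\<Sum>i\<in>UNIV. of_real (T$1$i) * v i) = 0" and z3: "(\<Sum>i\<in>UNIV. of_real (T$3$i) * v i) = 0"
  shows "v x = of_real (T$2$x) * (\<Sum>i\<in>UNIV. of_real (T$2$i) * v i)"
proof -
  have "v x = (\<Sum>y\<in>UNIV. (\<Sum>p\<in>UNIV. complex_of_real (T$p$x) * of_real (T$p$y)) * v y)"
  proof -
    have "(\<Sum>y\<in>UNIV. (\<Sum>p\<in>UNIV. complex_of_real (T$p$x) * of_real (T$p$y)) * v y) = (\<Sum>y\<in>UNIV. if x = y then v y else 0)"
      by (rule sum.cong) (simp_all add: delta3[OF orth])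
    then show ?thesis by simp
  qed
  also have "\<dots> = (\<Sum>p\<in>UNIV. of_real (T$p$x) * (\<Sum>y\<in>UNIV. of_real(T$p$y) * v y))"
    by (simp add: sum_3 algebra_simps)
  also have "\<dots> = of_real(T$2$x) * (\<Sum>i\<in>UNIV. of_real (T$2$i) * v i)" using z1 z3 by (simp add: sum_3)
  finally show ?thesis .
qed

lemma act0_1:
  assumes "\<forall>j k. (\<Sum>i\<in>UNIV. of_real(T$p$i) * f i j k) = 0"
  shows "mat_act3 T f p b c = 0"
proof -
  have "mat_act3 T f p b c = (\<Sum>j\<in>UNIV. \<Sum>k\<in>UNIV. of_real(T$b$j) * of_real(T$c$k) * (\<Sum>i\<in>UNIV. of_real (T$p$i) * f i j k))"
    by (simp add: mat_act3_def sum_3 algebra_simps)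
  then show ?thesis using assms by simp
qed

lemma act0_2:
  assumes "\<forall>i k. (\<Sum>j\<in>UNIV. of_real(T$p$j) * f i j k) = 0"
  shows "mat_act3 T f a p c = 0"
proof -
  have "mat_act3 T f a p c = (\<Sum>i\<in>UNIV. \<Sum>k\<in>UNIV. of_real(T$a$i) * of_real(T$c$k) * (\<Sum>j\<in>UNIV. of_real (T$p$j) * f i j k))"
    by (simp add: mat_act3_def sum_3 algebra_simps)
  then show ?thesis using assms by simp
qed

lemma act0_3:
  assumes "\<forall>i j. (\<Sum>k\<in>UNIV. of_real(T$p$k) * f i j k) = 0"
  shows "mat_act3 T f a b p = 0"
proof -
  have "mat_act3 T f a b p = (\<Sum>i\<in>UNIV. \<Sum>j\<in>UNIV. of_real(T$a$i) * of_real(T$b$j) * (\<Sum>k\<in>UNIV. of_real (T$p$k) * f i j k))"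
    by (simp add: mat_act3_def sum_3 algebra_simps)
  then show ?thesis using assms by simp
qed

theorem mainTheorem4:
  fixes f f\<beta> :: ctensor3 and \<beta> \<gamma> :: cvec3
  assumes "real_tensor3 f" and "sym_tensor3 f"
    and "\<beta> \<noteq> (\<lambda>_. 0)" and "bil \<beta> \<beta> = 0"
    and "sym_tensor3 f\<beta>" and "contract3 f\<beta> \<beta> = (\<lambda>_ _. 0)"
    and "f = (\<lambda>i j k. f\<beta> i j k + tprod3 \<beta> \<beta> \<gamma> i j k + tprod3 \<beta> \<gamma> \<beta> i j k + tprod3 \<gamma> \<beta> \<beta> i j k)"
  shows "(\<exists>T :: real^3^3. \<exists>lam::real. orthogonal_matrix T \<and>
            mat_act3 T f = (\<lambda>i j k. of_real lam * tprod3 e3 e3 e3 i j k))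
       \<and> (\<exists>\<alpha> :: cvec3. (\<forall>i. \<alpha> i \<in> \<real>) \<and> f = tprod3 \<alpha> \<alpha> \<alpha>)"
proof -
  have sym: "\<And>i j k. f i j k = f j i k \<and> f i j k = f i k j \<and> f i j k = f k j i"
    using assms(2) unfolding sym_tensor3_def by blast
  have fR: "\<And>i j k. Im (f i j k) = 0" using assms(1) by (simp add: real_tensor3_def complex_is_Real_iff)
  have fcnj: "\<And>i j k. cnj (f i j k) = f i j k" using fR by (simp add: complex_eq_iff)
  define g where "g = bil \<gamma> \<beta>"
  have ctrA: "(\<Sum>i\<in>UNIV. f i j k * \<beta> i) = g * \<beta> j * \<beta> k" for j k
  proof -
    have c0: "(\<Sum>i\<in>UNIV. f\<beta> i j k * \<beta> i) = 0"
      using fun_cong[OF fun_cong[OF assms(6)], of j k] by (simp add: contract3_def)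
    have "(\<Sum>i\<in>UNIV. f i j k * \<beta> i) = (\<Sum>i\<in>UNIV. f\<beta> i j k * \<beta> i) + bil \<beta> \<beta> * \<beta> j * \<gamma> k
       + bil \<beta> \<beta> * \<gamma> j * \<beta> k + bil \<gamma> \<beta> * \<beta> j * \<beta> k"
      by (simp add: assms(7) tprod3_def bil_def sum_3 algebra_simps)
    then show ?thesis using c0 assms(4) by (simp add: g_def)
  qed
  have ctrB: "(\<Sum>j\<in>UNIV. f i j k * cnj (\<beta> j)) = cnj g * cnj (\<beta> i) * cnj (\<beta> k)" for i k
  proof -
    have e: "f i j k * cnj (\<beta> j) = cnj (f j i k * \<beta> j)" for j
    proof -
      have "f i j k = f j i k" using sym by blast
      thus ?thesis by (simp add: fcnj)
    qed
    have "(\<Sum>j\<in>UNIV. f i j k * cnj (\<beta> j)) = (\<Sum>j\<in>UNIV. cnj (f j i k * \<beta> j))"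
      by (simp add: e)
    also have "\<dots> = cnj (\<Sum>j\<in>UNIV. f j i k * \<beta> j)" by (simp only: cnj_sum)
    also have "\<dots> = cnj (g * \<beta> i * \<beta> k)" by (simp add: ctrA)
    finally show ?thesis by simp
  qed
  define N where "N = (\<Sum>i\<in>UNIV. \<beta> i * cnj (\<beta> i))"
  have S: "(\<Sum>j\<in>UNIV. \<Sum>k\<in>UNIV. (\<Sum>i\<in>UNIV. f i j k * \<beta> i) * (cnj(\<beta> j) * cnj(\<beta> k)))
     = (\<Sum>i\<in>UNIV. \<Sum>k\<in>UNIV. (\<Sum>j\<in>UNIV. f i j k * cnj(\<beta> j)) * (\<beta> i * cnj (\<beta> k)))"
    by (simp add: sum_3 algebra_simps)
  have S1: "(\<Sum>j\<in>UNIV. \<Sum>k\<in>UNIV. (\<Sum>i\<in>UNIV. f i j k * \<beta> i) * (cnj(\<beta> j) * cnj(\<beta> k))) = g * N^2"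
    by (simp only: ctrA) (simp add: N_def sum_3 algebra_simps power2_eq_square)
  have S2: "(\<Sum>i\<in>UNIV. \<Sum>k\<in>UNIV. (\<Sum>j\<in>UNIV. f i j k * cnj(\<beta> j)) * (\<beta> i * cnj (\<beta> k)))
      = cnj g * N * cnj (bil \<beta> \<beta>)"
    by (simp only: ctrB) (simp add: N_def bil_def sum_3 algebra_simps)
  have gN: "g * N^2 = 0" using S S1 S2 assms(4) by simp
  obtain i0 where i0: "\<beta> i0 \<noteq> 0" using assms(3) by auto
  have ReN: "Re N = (\<Sum>i\<in>UNIV. (Re (\<beta> i))^2 + (Im (\<beta> i))^2)"
    by (simp add: N_def power2_eq_square)
  have "(Re (\<beta> i0))^2 + (Im (\<beta> i0))^2 \<le> Re N"
    unfolding ReN by (rule member_le_sum) auto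
  moreover have "0 < (Re (\<beta> i0))^2 + (Im (\<beta> i0))^2" using i0 complex_neq_0 by blast
  ultimately have "N \<noteq> 0" by auto
  then have g0: "g = 0" using gN by simp
  have ctr0: "(\<Sum>i\<in>UNIV. f i j k * \<beta> i) = 0" for j k using ctrA g0 by simp
  define a :: "real^3" where "a = (\<chi> i. Re (\<beta> i))"
  define b :: "real^3" where "b = (\<chi> i. Im (\<beta> i))"
  have za: "(\<Sum>i\<in>UNIV. complex_of_real (a$i) * f i j k) = 0" for j k
  proof -
    have "Re (\<Sum>i\<in>UNIV. f i j k * \<beta> i) = 0" "Im (\<Sum>i\<in>UNIV. f i j k * \<beta> i) = 0"
      using ctr0 by simp_all
    then show ?thesis by (simp add: a_def complex_eq_iff sum_3 fR algebra_simps)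
  qed
  have zb: "(\<Sum>i\<in>UNIV. complex_of_real (b$i) * f i j k) = 0" for j k
  proof -
    have "Re (\<Sum>i\<in>UNIV. f i j k * \<beta> i) = 0" "Im (\<Sum>i\<in>UNIV. f i j k * \<beta> i) = 0"
      using ctr0 by simp_all
    then show ?thesis by (simp add: b_def complex_eq_iff sum_3 fR algebra_simps)
  qed
  have "Re (bil \<beta> \<beta>) = 0" "Im (bil \<beta> \<beta>) = 0" using assms(4) by simp_all
  then have aabb: "a \<bullet> a = b \<bullet> b" and ab: "a \<bullet> b = 0"
    by (simp_all add: a_def b_def bil_def inner_vec_def sum_3 algebra_simps)
  have "a \<noteq> 0"
  proof
    assume "a = 0"
    then have "b = 0" using aabb by simp
    then have "Re (\<beta> i0) = 0" "Im (\<beta> i0) = 0" using \<open>a = 0\<close>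
      by (simp_all add: a_def b_def vec_eq_iff)
    then show False using i0 by (simp add: complex_eq_iff)
  qed
  define r where "r = norm a"
  have rpos: "r > 0" using \<open>a \<noteq> 0\<close> by (simp add: r_def)
  have aa: "a \<bullet> a = r^2" by (simp add: r_def power2_norm_eq_inner)
  have bb: "b \<bullet> b = r^2" using aa aabb by simp
  define c where "c = cross3 a b"
  have nb: "(norm b)^2 = r^2" using bb by (simp add: power2_norm_eq_inner)
  hence nb': "norm b = r" using rpos power2_eq_imp_eq[of "norm b" r] by simp
  have "(norm c)^2 = (r*r)^2" using norm_cross_dot[of a b] ab nb' by (simp add: c_def r_def power_mult_distrib)
  then have "norm c = r*r" using rpos power2_eq_imp_eq[of "norm c" "r*r"] by simp
  then have cc: "c \<bullet> c = (r*r)^2" by (simp add: power2_norm_eq_inner[symmetric])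
  have ac: "a \<bullet> c = 0" unfolding c_def by (rule dot_cross_self(1))
  have bc: "b \<bullet> c = 0" unfolding c_def using dot_cross_self(3) by (simp add: inner_commute)
  define ua where "ua = (1/r) *\<^sub>R a"
  define ub where "ub = (1/r) *\<^sub>R b"
  define uc where "uc = (1/(r*r)) *\<^sub>R c"
  define T :: "real^3^3" where "T = (\<chi> i. if i = 2 then uc else if i = 1 then ua else ub)"
  have T1: "T$1 = ua" and T2: "T$2 = uc" and T3: "T$3 = ub" by (simp_all add: T_def)
  have rowdot: "(T ** transpose T)$i$j = T$i \<bullet> T$j" for i j
    by (simp add: matrix_matrix_mult_def transpose_def inner_vec_def)
  have TT: "T ** transpose T = mat 1"
    unfolding vec_eq_iff forall_3 rowdot T1 T2 T3 using rpos aa bb cc ab ac bc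
    by (simp add: mat_def ua_def ub_def uc_def inner_commute power2_eq_square)
  have orth: "transpose T ** T = mat 1" using TT matrix_left_right_inverse by blast
  have orthT: "orthogonal_matrix T" by (simp add: orthogonal_matrix_def TT orth)
  have z1: "(\<Sum>i\<in>UNIV. of_real(T$1$i) * f i j k) = 0" for j k
  proof -
    have "(\<Sum>i\<in>UNIV. of_real(T$1$i) * f i j k) = of_real (1/r) * (\<Sum>i\<in>UNIV. of_real(a$i) * f i j k)"
      by (simp add: sum_distrib_left T1 ua_def mult.assoc)
    then show ?thesis using za by simp
  qed
  have z3: "(\<Sum>i\<in>UNIV. of_real(T$3$i) * f i j k) = 0" for j k
  proof -
    have "(\<Sum>i\<in>UNIV. of_real(T$3$i) * f i j k) = of_real (1/r) * (\<Sum>i\<in>UNIV. of_real(b$i) * f i j k)"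
      by (simp add: sum_distrib_left T3 ub_def mult.assoc)
    then show ?thesis using zb by simp
  qed
  have zz1: "(\<Sum>i\<in>UNIV. of_real(T$p$i) * f i j k) = 0" if "p \<noteq> 2" for p j k
    using that z1 z3 exhaust_3[of p] by auto
  have zz2: "(\<Sum>j\<in>UNIV. of_real(T$p$j) * f i j k) = 0" if "p \<noteq> 2" for p i k
  proof -
    have "(\<Sum>j\<in>UNIV. of_real(T$p$j) * f i j k) = (\<Sum>j\<in>UNIV. of_real(T$p$j) * f j i k)"
      by (rule sum.cong) (use sym in auto)
    then show ?thesis using zz1[OF that] by simp
  qed
  have zz3: "(\<Sum>k\<in>UNIV. of_real(T$p$k) * f i j k) = 0" if "p \<noteq> 2" for p i j
  proof -
    have "(\<Sum>k\<in>UNIV. of_real(T$p$k) * f i j k) = (\<Sum>k\<in>UNIV. of_real(T$p$k) * f k j i)"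
      by (rule sum.cong) (use sym in auto)
    then show ?thesis using zz1[OF that] by simp
  qed
  define m where "m = Re (mat_act3 T f 2 2 2)"
  have mreal: "mat_act3 T f 2 2 2 = of_real m"
    by (simp add: complex_eq_iff m_def mat_act3_def sum_3 fR)
  have part1: "mat_act3 T f = (\<lambda>i j k. of_real m * tprod3 e3 e3 e3 i j k)"
  proof (intro ext)
    fix x y z :: 3
    show "mat_act3 T f x y z = of_real m * tprod3 e3 e3 e3 x y z"
    proof (cases "x = 2 \<and> y = 2 \<and> z = 2")
      case True
      then show ?thesis by (simp add: mreal tprod3_def e3_def)
    next
      case False
      then have "mat_act3 T f x y z = 0"
        using act0_1[of T x f y z] act0_2[of T y f x z] act0_3[of T z f x y] zz1 zz2 zz3 by blast
      then show ?thesis using False by (auto simp: tprod3_def e3_def)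
    qed
  qed
  define h where "h j k = (\<Sum>i\<in>UNIV. of_real(T$2$i) * f i j k)" for j k
  have F1: "f i j k = of_real (T$2$i) * h j k" for i j k
    unfolding h_def by (rule slot1[OF orth]) (use z1 z3 in auto)
  define h2 where "h2 k = (\<Sum>j\<in>UNIV. of_real(T$2$j) * h j k)" for k
  have hz: "(\<Sum>j\<in>UNIV. of_real(T$p$j) * h j k) = 0" if "p \<noteq> 2" for p k
  proof -
    have "(\<Sum>j\<in>UNIV. of_real(T$p$j) * h j k) = (\<Sum>i\<in>UNIV. of_real(T$2$i) * (\<Sum>j\<in>UNIV. of_real(T$p$j) * f i j k))"
      by (simp add: h_def sum_3 algebra_simps)
    then show ?thesis using zz2[OF that] by simp
  qed
  have F2: "h j k = of_real (T$2$j) * h2 k" for j k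
    unfolding h2_def by (rule slot1[OF orth]) (use hz in auto)
  define h3 where "h3 = (\<Sum>k\<in>UNIV. of_real(T$2$k) * h2 k)"
  have h2z: "(\<Sum>k\<in>UNIV. of_real(T$p$k) * h2 k) = 0" if "p \<noteq> 2" for p
  proof -
    have "(\<Sum>k\<in>UNIV. of_real(T$p$k) * h2 k) = (\<Sum>i\<in>UNIV. \<Sum>j\<in>UNIV. of_real(T$2$i) * of_real(T$2$j) * (\<Sum>k\<in>UNIV. of_real(T$p$k) * f i j k))"
      by (simp add: h2_def h_def sum_3 algebra_simps)
    then show ?thesis using zz3[OF that] by simp
  qed
  have F3: "h2 k = of_real (T$2$k) * h3" for k
    unfolding h3_def by (rule slot1[OF orth]) (use h2z in auto)
  have h3m: "h3 = of_real m"
  proof -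
    have "h3 = mat_act3 T f 2 2 2"
      by (simp add: h3_def h2_def h_def mat_act3_def sum_3 algebra_simps)
    then show ?thesis using mreal by simp
  qed
  define \<alpha> :: cvec3 where "\<alpha> i = of_real (root 3 m * T$2$i)" for i
  have part2: "f = tprod3 \<alpha> \<alpha> \<alpha>"
  proof (intro ext)
    fix i j k
    have "f i j k = of_real (T$2$i) * of_real (T$2$j) * of_real (T$2$k) * of_real m"
      using F1 F2 F3 h3m by (simp add: mult.assoc)
    also have "\<dots> = of_real ((root 3 m)^3 * T$2$i * T$2$j * T$2$k)"
      by (simp add: odd_real_root_pow)
    also have "\<dots> = tprod3 \<alpha> \<alpha> \<alpha> i j k"
      by (simp add: tprod3_def \<alpha>_def power3_eq_cube algebra_simps)
    finally show "f i j k = tprod3 \<alpha> \<alpha> \<alpha> i j k" .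
  qed
  have areal: "\<forall>i. \<alpha> i \<in> \<real>" by (simp add: \<alpha>_def)
  show ?thesis
    using orthT part1 part2 areal by blast
qed
end
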